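(* Let $k\ge 1$ be an integer and let $r_0,\dots,r_k$ be distinct integers. Then there is an integer $M\ge 1$ such that, for each $\xi\in\mathbb{R}$, there exists at least one index $i\in\{0,1,\dots,k\}$ with $r_i\neq\xi$ for which the point $\xi_i=1/(M(\xi-r_i))$ satisfies \[ \omega^{\mathrm{lead}}_k(\xi_i)=\omega_k(\xi_i)=\omega_k(\xi). \]
   Context: For a polynomial $P\in\mathbb{Z}[x]$, $\|P\|$ denotes the largest absolute value of its coefficients, and $c_k(P)$ denotes the coefficient of $x^k$ in $P$. For $\xi\in\mathbb{R}$ and an integer $n\ge 1$, $\omega_n(\xi)$ is the supremum of all $\omega\in\mathbb{R}$ for which there exist infinitely many non-zero polynomials $P\in\mathbb{Z}[x]$ of degree at most $n$ with $|P(\xi)|\le\|P\|^{-\omega}$. The quantity $\omega^{\mathrm{lead}}_k(\xi)$ is defined in the same way as $\omega_k(\xi)$, except that one restricts to non-zero polynomials $P\in\mathbb{Z}[x]$ of degree at most $k$ satisfying $|c_k(P)|=\|P\|$. *)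

theory Defs
  imports "HOL-Analysis.Analysis" "HOL-Computational_Algebra.Polynomial"
begin

definition hgt :: "int poly \<Rightarrow> int" where
  "hgt P = Max {\<bar>coeff P i\<bar> | i. i \<le> degree P}"

definition ipoly :: "int poly \<Rightarrow> real \<Rightarrow> real" where
  "ipoly P x = poly (map_poly real_of_int P) x"

definition omega :: "nat \<Rightarrow> real \<Rightarrow> ereal" where
  "omega n \<xi> = Sup (ereal ` {w :: real. infinite {P :: int poly. P \<noteq> 0 \<and> degree P \<le> n \<and>
      \<bar>ipoly P \<xi>\<bar> \<le> (real_of_int (hgt P)) powr (- w)}})"

definition omega_lead :: "nat \<Rightarrow> real \<Rightarrow> ereal" where
  "omega_lead k \<xi> = Sup (ereal ` {w :: real. infinite {P :: int poly. P \<noteq> 0 \<and> degree P \<le> k \<and>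
      \<bar>coeff P k\<bar> = hgt P \<and>
      \<bar>ipoly P \<xi>\<bar> \<le> (real_of_int (hgt P)) powr (- w)}})"

end

theory Submission
  imports Defs
begin


abbreviation rp :: "int poly \<Rightarrow> real poly" where "rp \<equiv> map_poly real_of_int"

lemma rp_add: "rp (p + q) = rp p + rp q"
  by (rule poly_eqI) (simp add: coeff_map_poly)
lemma rp_mult: "rp (p * q) = rp p * rp q"
  by (rule poly_eqI) (simp add: coeff_map_poly coeff_mult)
lemma rp_smult: "rp (smult c p) = smult (real_of_int c) (rp p)"
  by (rule poly_eqI) (simp add: coeff_map_poly)
lemma rp_pCons: "rp (pCons a p) = pCons (real_of_int a) (rp p)"
  by (rule poly_eqI) (simp add: coeff_map_poly coeff_pCons split: nat.split)
lemma rp_power: "rp (p ^ n) = rp p ^ n"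
  by (induction n) (simp_all add: rp_mult)
lemma rp_sum: "rp (sum f S) = (\<Sum>x\<in>S. rp (f x))"
  by (induction S rule: infinite_finite_induct) (simp_all add: rp_add)
lemma rp_monom: "rp (monom c n) = monom (real_of_int c) n"
  by (simp add: map_poly_monom)
lemma rp_pcompose: "rp (pcompose p q) = pcompose (rp p) (rp q)"
  by (induction p) (simp_all add: pcompose_pCons rp_add rp_mult rp_pCons)
lemma degree_rp[simp]: "degree (rp p) = degree p"
  by (simp add: degree_map_poly)

lemma ipoly_altdef: assumes "degree P \<le> n"
  shows "ipoly P x = (\<Sum>i\<le>n. real_of_int (coeff P i) * x ^ i)"
proof -
  have "ipoly P x = (\<Sum>i\<le>degree P. real_of_int (coeff P i) * x ^ i)"
    unfolding ipoly_def by (simp add: poly_altdef coeff_map_poly)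
  also have "\<dots> = (\<Sum>i\<le>n. real_of_int (coeff P i) * x ^ i)"
    by (rule sum.mono_neutral_left) (use assms in \<open>auto simp: coeff_eq_0\<close>)
  finally show ?thesis .
qed



lemma lagrange_bound:
  fixes T :: "real set"
  assumes fin: "finite T" and cardT: "card T = Suc k"
  shows "\<exists>C>0. \<forall>p. degree p \<le> k \<longrightarrow> (\<forall>j. \<bar>coeff p j\<bar> \<le> C * (\<Sum>t\<in>T. \<bar>poly p t\<bar>))"
proof -
  define L where "L t = smult (1 / (\<Prod>s\<in>T-{t}. (t - s))) (\<Prod>s\<in>T-{t}. [:-s,1:])" for t
  have degL: "degree (L t) \<le> k" if "t \<in> T" for t
  proof -
    have "degree (L t) \<le> degree (\<Prod>s\<in>T-{t}. [:-s,1:])"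
      unfolding L_def by (rule degree_smult_le)
    also have "\<dots> \<le> sum (degree \<circ> (\<lambda>s. [:-s,1:])) (T-{t})"
      by (rule degree_prod_sum_le) (use fin in auto)
    also have "\<dots> = card (T - {t})" by simp
    also have "\<dots> = k" using that fin cardT by simp
    finally show ?thesis .
  qed
  have Lval: "poly (L t) u = (if u = t then 1 else 0)" if "t \<in> T" "u \<in> T" for t u
  proof (cases "u = t")
    case True
    have "(\<Prod>s\<in>T-{t}. (t - s)) \<noteq> 0" using fin by (auto simp: prod_zero_iff)
    then show ?thesis using True by (simp add: L_def poly_prod)
  next
    case False
    have "(\<Prod>s\<in>T-{t}. poly [:-s,1:] u) = 0"
      using fin that False by (auto simp: prod_zero_iff intro!: bexI[of _ u])
    then show ?thesis using False by (simp add: L_def poly_prod)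
  qed
  have interp: "p = (\<Sum>t\<in>T. smult (poly p t) (L t))" if dp: "degree p \<le> k" for p
  proof (rule ccontr)
    define q where "q = p - (\<Sum>t\<in>T. smult (poly p t) (L t))"
    assume "p \<noteq> (\<Sum>t\<in>T. smult (poly p t) (L t))"
    then have q0: "q \<noteq> 0" by (simp add: q_def)
    have "degree (\<Sum>t\<in>T. smult (poly p t) (L t)) \<le> k"
      by (rule degree_sum_le) (use fin degL in \<open>auto intro: order.trans[OF degree_smult_le]\<close>)
    then have dq: "degree q \<le> k" unfolding q_def using dp
      by (meson degree_diff_le)
    have "poly q u = 0" if "u \<in> T" for u
    proof -
      have "poly (\<Sum>t\<in>T. smult (poly p t) (L t)) u = (\<Sum>t\<in>T. poly p t * (if u = t then 1 else 0))"
        by (simp add: poly_sum Lval that)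
      also have "\<dots> = poly p u" using fin that by (simp add: if_distrib cong: if_cong)
      finally show ?thesis by (simp add: q_def)
    qed
    then have "T \<subseteq> {x. poly q x = 0}" by auto
    then have "card T \<le> card {x. poly q x = 0}"
      by (intro card_mono poly_roots_finite q0)
    also have "\<dots> \<le> degree q" by (rule card_poly_roots_bound[OF q0])
    finally show False using dq cardT by simp
  qed
  define C where "C = 1 + (\<Sum>t\<in>T. \<Sum>i\<le>k. \<bar>coeff (L t) i\<bar>)"
  have Cb: "\<bar>coeff (L t) j\<bar> \<le> C" if "t \<in> T" for t j
  proof (cases "j \<le> k")
    case True
    have "\<bar>coeff (L t) j\<bar> \<le> (\<Sum>i\<le>k. \<bar>coeff (L t) i\<bar>)"
      by (rule member_le_sum) (use True in auto)
    also have "\<dots> \<le> (\<Sum>t\<in>T. \<Sum>i\<le>k. \<bar>coeff (L t) i\<bar>)"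
      by (rule member_le_sum) (use that fin in \<open>auto intro: sum_nonneg\<close>)
    finally show ?thesis unfolding C_def by simp
  next
    case False
    then have "coeff (L t) j = 0" using degL[OF that] by (intro coeff_eq_0) simp
    moreover have "0 \<le> (\<Sum>t\<in>T. \<Sum>i\<le>k. \<bar>coeff (L t) i\<bar>)" by (intro sum_nonneg) auto
    ultimately show ?thesis unfolding C_def by simp
  qed
  have Cpos: "C > 0" unfolding C_def by (smt (verit) sum_nonneg abs_ge_zero)
  show ?thesis
  proof (intro exI[of _ C] conjI allI impI Cpos)
    fix p :: "real poly" and j assume dp: "degree p \<le> k"
    have "coeff p j = (\<Sum>t\<in>T. poly p t * coeff (L t) j)"
      by (subst interp[OF dp]) (simp add: coeff_sum)
    also have "\<bar>\<dots>\<bar> \<le> (\<Sum>t\<in>T. \<bar>poly p t * coeff (L t) j\<bar>)" by (rule sum_abs)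
    also have "\<dots> \<le> (\<Sum>t\<in>T. \<bar>poly p t\<bar> * C)"
      by (intro sum_mono) (auto simp: abs_mult intro: mult_left_mono Cb)
    also have "\<dots> = C * (\<Sum>t\<in>T. \<bar>poly p t\<bar>)" by (simp add: sum_distrib_left mult_ac)
    finally show "\<bar>coeff p j\<bar> \<le> C * (\<Sum>t\<in>T. \<bar>poly p t\<bar>)" .
  qed
qed



lemma hgt_set: "{\<bar>coeff P i\<bar> | i. i \<le> degree P} = (\<lambda>i. \<bar>coeff P i\<bar>) ` {..degree P}"
  by auto

lemma hgt_coeff: "\<bar>coeff P i\<bar> \<le> hgt P"
proof (cases "i \<le> degree P")
  case True
  then show ?thesis unfolding hgt_def hgt_set by (intro Max_ge) auto
next
  case False
  then have "coeff P i = 0" by (simp add: coeff_eq_0)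
  moreover have "\<bar>coeff P 0\<bar> \<le> hgt P" unfolding hgt_def hgt_set by (intro Max_ge) auto
  ultimately show ?thesis by simp
qed

lemma hgt_attained: "\<exists>i. hgt P = \<bar>coeff P i\<bar>"
proof -
  have "hgt P \<in> (\<lambda>i. \<bar>coeff P i\<bar>) ` {..degree P}"
    unfolding hgt_def hgt_set by (intro Max_in) auto
  then show ?thesis by auto
qed

lemma hgt_le: "(\<And>i. \<bar>coeff P i\<bar> \<le> B) \<Longrightarrow> hgt P \<le> B"
  using hgt_attained by metis

lemma hgt_pos: "P \<noteq> 0 \<Longrightarrow> hgt P \<ge> 1"
proof -
  assume "P \<noteq> 0"
  then have "coeff P (degree P) \<noteq> 0" by simp
  then have "\<bar>coeff P (degree P)\<bar> \<ge> 1" by linarith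
  then show ?thesis using hgt_coeff[of P "degree P"] by linarith
qed

lemma finite_hgt: "finite {P :: int poly. degree P \<le> k \<and> hgt P \<le> B}"
proof -
  let ?S = "{P :: int poly. degree P \<le> k \<and> hgt P \<le> B}"
  let ?f = "\<lambda>P. restrict (coeff P) {..k}"
  have "inj_on ?f ?S"
  proof (rule inj_onI)
    fix P Q assume P: "P \<in> ?S" and Q: "Q \<in> ?S" and e: "?f P = ?f Q"
    show "P = Q"
    proof (rule poly_eqI)
      fix n show "coeff P n = coeff Q n"
      proof (cases "n \<le> k")
        case True
        have "?f P n = ?f Q n" using e by (rule arg_cong)
        then show ?thesis using True by simp
      next
        case False
        then show ?thesis using P Q by (simp add: coeff_eq_0)
      qed
    qed
  qed
  moreover have "?f ` ?S \<subseteq> PiE {..k} (\<lambda>_. {-B..B})"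
  proof
    fix g assume "g \<in> ?f ` ?S"
    then obtain P where P: "P \<in> ?S" and g: "g = ?f P" by blast
    have "coeff P i \<in> {-B..B}" for i using hgt_coeff[of P i] P by auto
    then show "g \<in> PiE {..k} (\<lambda>_. {-B..B})" unfolding g by auto
  qed
  moreover have "finite (PiE {..k} (\<lambda>_. {-B..B}))"
    by (rule finite_PiE) auto
  ultimately have "finite (?f ` ?S)" by (rule_tac finite_subset) 
  then show ?thesis using \<open>inj_on ?f ?S\<close> by (rule finite_imageD)
qed

lemma ipoly_bound:
  fixes x :: real
  assumes "degree P \<le> k"
  shows "\<bar>ipoly P x\<bar> \<le> (Suc k) * hgt P * max 1 \<bar>x\<bar> ^ k"
proof -
  have "\<bar>ipoly P x\<bar> \<le> (\<Sum>i\<le>k. \<bar>real_of_int (coeff P i) * x ^ i\<bar>)"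
    unfolding ipoly_altdef[OF assms] by (rule sum_abs)
  also have "\<dots> \<le> (\<Sum>i\<le>k. hgt P * max 1 \<bar>x\<bar> ^ k)"
  proof (intro sum_mono)
    fix i assume "i \<in> {..k}"
    then have "\<bar>x\<bar> ^ i \<le> max 1 \<bar>x\<bar> ^ k"
    proof -
      have "\<bar>x\<bar> ^ i \<le> max 1 \<bar>x\<bar> ^ i" by (intro power_mono) auto
      also have "\<dots> \<le> max 1 \<bar>x\<bar> ^ k" using \<open>i \<in> {..k}\<close> by (intro power_increasing) auto
      finally show ?thesis .
    qed
    moreover have "\<bar>real_of_int (coeff P i)\<bar> \<le> hgt P" using hgt_coeff[of P i] by linarith
    ultimately show "\<bar>real_of_int (coeff P i) * x ^ i\<bar> \<le> hgt P * max 1 \<bar>x\<bar> ^ k"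
      by (simp add: abs_mult power_abs mult_mono')
  qed
  also have "\<dots> = (Suc k) * hgt P * max 1 \<bar>x\<bar> ^ k" by simp
  finally show ?thesis .
qed



lemma xfer_lemma:
  fixes X :: "'a set" and Y :: "'b set" and f :: "'a \<Rightarrow> 'b"
    and hX vX :: "'a \<Rightarrow> real" and hY vY :: "'b \<Rightarrow> real"
  assumes inf: "infinite {x\<in>X. vX x \<le> hX x powr (-w)}"
    and ww: "w' < w"
    and inj: "inj_on f X"
    and fX: "f ` X \<subseteq> Y"
    and hX1: "\<forall>x\<in>X. hX x \<ge> 1"
    and hY1: "\<forall>y\<in>Y. hY y \<ge> 1"
    and up: "\<forall>x\<in>X. hY (f x) \<le> b * hX x" and bpos: "b > 0"
    and low: "w \<ge> 0 \<or> (a > 0 \<and> (\<forall>x\<in>X. a * hX x \<le> hY (f x)))"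
    and val: "\<forall>x\<in>X. vY (f x) \<le> K * vX x" and K0: "K \<ge> 0"
    and finY: "\<And>B. finite {y\<in>Y. hY y \<le> B}"
  shows "infinite {y\<in>Y. vY y \<le> hY y powr (-w')}"
proof -
  define Z where "Z = {x\<in>X. vX x \<le> hX x powr (-w)}"
  have "\<exists>K2\<ge>0. \<forall>x\<in>Z. vY (f x) \<le> K2 * hY (f x) powr (-w)"
  proof (cases "w \<ge> 0")
    case True
    show ?thesis
    proof (intro exI[of _ "K * b powr w"] conjI ballI)
      show "0 \<le> K * b powr w" using K0 by simp
      fix x assume x: "x \<in> Z"
      then have xX: "x \<in> X" by (simp add: Z_def)
      have hy: "hY (f x) \<ge> 1" using hY1 fX xX by auto
      have "hY (f x) / b \<le> hX x" using up xX bpos by (simp add: divide_le_eq mult.commute)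
      then have "hX x powr (-w) \<le> (hY (f x) / b) powr (-w)"
        by (intro powr_mono2') (use True hy bpos in auto)
      also have "\<dots> = b powr w * hY (f x) powr (-w)"
        using hy bpos by (subst powr_divide) (auto simp: powr_minus field_simps)
      finally have "vX x \<le> b powr w * hY (f x) powr (-w)" using x by (simp add: Z_def)
      then have "K * vX x \<le> K * (b powr w * hY (f x) powr (-w))" using K0 by (rule mult_left_mono)
      then show "vY (f x) \<le> K * b powr w * hY (f x) powr (-w)" using val xX by (simp add: mult.assoc) (smt (verit))
    qed
  next
    case False
    then have a: "a > 0" "\<forall>x\<in>X. a * hX x \<le> hY (f x)" using low by auto
    show ?thesis
    proof (intro exI[of _ "K * a powr w"] conjI ballI)
      show "0 \<le> K * a powr w" using K0 by simp
      fix x assume x: "x \<in> Z"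
      then have xX: "x \<in> X" by (simp add: Z_def)
      have hy: "hY (f x) \<ge> 1" using hY1 fX xX by auto
      have hx: "hX x \<ge> 1" using hX1 xX by auto
      have "hX x \<le> hY (f x) / a" using a xX by (simp add: le_divide_eq mult.commute)
      then have "hX x powr (-w) \<le> (hY (f x) / a) powr (-w)"
        by (intro powr_mono2) (use False hx in auto)
      also have "\<dots> = a powr w * hY (f x) powr (-w)"
        using hy a by (subst powr_divide) (auto simp: powr_minus field_simps)
      finally have "vX x \<le> a powr w * hY (f x) powr (-w)" using x by (simp add: Z_def)
      then have "K * vX x \<le> K * (a powr w * hY (f x) powr (-w))" using K0 by (rule mult_left_mono)
      then show "vY (f x) \<le> K * a powr w * hY (f x) powr (-w)" using val xX by (simp add: mult.assoc) (smt (verit))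
    qed
  qed
  then obtain K2 where K2: "K2 \<ge> 0" "\<forall>x\<in>Z. vY (f x) \<le> K2 * hY (f x) powr (-w)" by blast
  define B0 where "B0 = K2 powr (1 / (w - w'))"
  define Z' where "Z' = {x\<in>Z. hY (f x) > B0}"
  have "Z \<subseteq> Z' \<union> (f -` {y\<in>Y. hY y \<le> B0} \<inter> X)"
    using fX by (auto simp: Z'_def Z_def)
  moreover have "finite (f -` {y\<in>Y. hY y \<le> B0} \<inter> X)"
    by (rule finite_vimage_IntI[OF finY inj])
  ultimately have infZ': "infinite Z'" using inf unfolding Z_def[symmetric]
    by (meson finite_Un finite_subset)
  have "f ` Z' \<subseteq> {y\<in>Y. vY y \<le> hY y powr (-w')}"
  proof
    fix y assume "y \<in> f ` Z'"
    then obtain x where x: "x \<in> Z'" and y: "y = f x" by blast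
    have xX: "x \<in> X" using x by (simp add: Z'_def Z_def)
    have yY: "y \<in> Y" using fX xX y by auto
    have hy: "hY y \<ge> 1" using hY1 yY by auto
    have big: "hY y > B0" using x y by (simp add: Z'_def)
    have "K2 \<le> hY y powr (w - w')"
    proof (cases "K2 = 0")
      case True then show ?thesis by simp
    next
      case False
      then have "K2 = B0 powr (w - w')" unfolding B0_def using K2(1) ww
        by (simp add: powr_powr)
      also have "\<dots> \<le> hY y powr (w - w')"
        by (intro powr_mono2) (use ww big in \<open>auto simp: B0_def\<close>)
      finally show ?thesis .
    qed
    then have "K2 * hY y powr (-w) \<le> hY y powr (w - w') * hY y powr (-w)"
      by (intro mult_right_mono) auto
    also have "\<dots> = hY y powr (-w')" using hy by (simp add: powr_add[symmetric])
    finally have "vY y \<le> hY y powr (-w')"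
      using K2(2) x y by (smt (verit) Z'_def mem_Collect_eq)
    then show "y \<in> {y\<in>Y. vY y \<le> hY y powr (-w')}" using yY by simp
  qed
  moreover have "infinite (f ` Z')"
  proof
    assume "finite (f ` Z')"
    moreover have "inj_on f Z'" using inj by (rule inj_on_subset) (auto simp: Z'_def Z_def)
    ultimately have "finite Z'" by (rule finite_imageD)
    then show False using infZ' by simp
  qed
  ultimately show ?thesis using infinite_super by blast
qed



lemma ipoly_pCons: "ipoly (pCons a p) x = real_of_int a + x * ipoly p x"
  by (simp add: ipoly_def rp_pCons)

lemma ipoly_pcompose_shift: "ipoly (pcompose P [:r,1:]) y = ipoly P (y + real_of_int r)"
  by (simp add: ipoly_def rp_pcompose rp_pCons poly_pcompose algebra_simps)

lemma rp_inj: "rp P = rp Q \<Longrightarrow> P = Q"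
  by (metis (no_types) coeff_map_poly of_int_0 of_int_eq_iff poly_eqI)

lemma ipoly_ext: "(\<And>x. ipoly P x = ipoly Q x) \<Longrightarrow> P = Q"
  unfolding ipoly_def by (metis poly_eq_poly_eq_iff rp_inj ext)

definition Tf :: "nat \<Rightarrow> int \<Rightarrow> int \<Rightarrow> int poly \<Rightarrow> int poly" where
  "Tf k r M P = (\<Sum>m\<le>k. monom (coeff (pcompose P [:r,1:]) (k-m) * M^m) m)"

lemma Tf_coeff: "coeff (Tf k r M P) m = (if m \<le> k then coeff (pcompose P [:r,1:]) (k-m) * M^m else 0)"
  unfolding Tf_def by (simp add: coeff_sum coeff_monom)

lemma Tf_degree: "degree (Tf k r M P) \<le> k"
  unfolding Tf_def by (rule degree_sum_le) (auto intro: order.trans[OF degree_monom_le])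

lemma degree_shift: "degree (pcompose (P::int poly) [:r,1:]) = degree P"
  using degree_pcompose[of P "[:r,1:]"] by simp

lemma Tf_eval:
  fixes x :: real
  assumes dP: "degree P \<le> k" and M: "M \<noteq> 0" and x: "x \<noteq> real_of_int r"
  shows "ipoly (Tf k r M P) (1 / (real_of_int M * (x - real_of_int r))) = ipoly P x / (x - real_of_int r) ^ k"
proof -
  define d where "d = x - real_of_int r"
  have d0: "d \<noteq> 0" using x by (simp add: d_def)
  define A where "A = pcompose P [:r,1:]"
  have dA: "degree A \<le> k" using dP by (simp add: A_def degree_shift)
  have "ipoly (Tf k r M P) (1 / (real_of_int M * d)) =
      (\<Sum>m\<le>k. real_of_int (coeff A (k-m) * M^m) * (1 / (real_of_int M * d)) ^ m)"
    by (subst ipoly_altdef[OF Tf_degree]) (simp add: Tf_coeff A_def)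
  also have "\<dots> = (\<Sum>m\<le>k. real_of_int (coeff A (k-m)) * d ^ (k-m)) / d ^ k"
    unfolding sum_divide_distrib
  proof (intro sum.cong refl)
    fix m assume "m \<in> {..k}"
    then have "d ^ k = d ^ (k - m) * d ^ m" by (simp add: power_add[symmetric])
    then show "real_of_int (coeff A (k - m) * M ^ m) * (1 / (real_of_int M * d)) ^ m =
        real_of_int (coeff A (k - m)) * d ^ (k - m) / d ^ k"
      using M d0 by (simp add: power_divide power_mult_distrib field_simps)
  qed
  also have "(\<Sum>m\<le>k. real_of_int (coeff A (k-m)) * d ^ (k-m)) = (\<Sum>j\<le>k. real_of_int (coeff A j) * d ^ j)"
    by (rule sum.reindex_bij_witness[of _ "\<lambda>j. k - j" "\<lambda>j. k - j"]) auto
  also have "\<dots> = ipoly A d" by (rule ipoly_altdef[OF dA, symmetric])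
  also have "\<dots> = ipoly P x" by (simp add: A_def ipoly_pcompose_shift d_def)
  finally show ?thesis by (simp add: d_def)
qed

lemma Tf_inj:
  assumes "degree P1 \<le> k" "degree P2 \<le> k" "M \<noteq> 0" "Tf k r M P1 = Tf k r M P2"
  shows "P1 = P2"
proof -
  have "pcompose P1 [:r,1:] = pcompose P2 [:r,1:]"
  proof (rule poly_eqI)
    fix j show "coeff (pcompose P1 [:r,1:]) j = coeff (pcompose P2 [:r,1:]) j"
    proof (cases "j \<le> k")
      case True
      have "coeff (Tf k r M P1) (k - j) = coeff (Tf k r M P2) (k - j)" using assms(4) by simp
      then show ?thesis using True assms(3) by (simp add: Tf_coeff)
    next
      case False
      then show ?thesis using assms(1,2) by (simp add: coeff_eq_0 degree_shift)
    qed
  qed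
  then have "ipoly P1 y = ipoly P2 y" for y
    using ipoly_pcompose_shift[of P1 r "y - real_of_int r"] ipoly_pcompose_shift[of P2 r "y - real_of_int r"]
    by simp
  then show ?thesis by (rule ipoly_ext)
qed

definition Tb :: "nat \<Rightarrow> int \<Rightarrow> int \<Rightarrow> int poly \<Rightarrow> int poly" where
  "Tb k r M Q = (\<Sum>m\<le>k. smult (coeff Q m) ([:-M*r, M:] ^ (k-m)))"

lemma Tb_degree: "degree (Tb k r M Q) \<le> k"
  unfolding Tb_def
proof (rule degree_sum_le)
  fix m assume "m \<in> {..k}"
  have "degree ([:-M*r, M:] ^ (k-m)) \<le> 1 * (k - m)"
    by (rule degree_power_le[THEN order.trans]) auto
  moreover have "degree (smult (coeff Q m) ([:-M*r, M:] ^ (k-m))) \<le> degree ([:-M*r, M:] ^ (k-m))"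
    by (rule degree_smult_le)
  ultimately show "degree (smult (coeff Q m) ([:-M*r, M:] ^ (k-m))) \<le> k"
    by linarith
qed simp

lemma Tb_eval0: "ipoly (Tb k r M Q) x = (\<Sum>m\<le>k. real_of_int (coeff Q m) * (real_of_int M * (x - real_of_int r)) ^ (k-m))"
  unfolding Tb_def ipoly_def
  by (simp add: rp_sum rp_smult rp_power rp_pCons poly_sum algebra_simps)

lemma Tb_eval:
  fixes x :: real
  assumes dQ: "degree Q \<le> k" and M: "M \<noteq> 0" and x: "x \<noteq> real_of_int r"
  shows "ipoly (Tb k r M Q) x = (real_of_int M * (x - real_of_int r)) ^ k * ipoly Q (1 / (real_of_int M * (x - real_of_int r)))"
proof -
  define e where "e = real_of_int M * (x - real_of_int r)"
  have e0: "e \<noteq> 0" using M x by (simp add: e_def)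
  have "ipoly (Tb k r M Q) x = (\<Sum>m\<le>k. real_of_int (coeff Q m) * e ^ (k-m))"
    by (simp add: Tb_eval0 e_def)
  also have "\<dots> = e ^ k * (\<Sum>m\<le>k. real_of_int (coeff Q m) * (1 / e) ^ m)"
    unfolding sum_distrib_left
  proof (intro sum.cong refl)
    fix m assume "m \<in> {..k}"
    then have "e ^ k = e ^ (k - m) * e ^ m" by (simp add: power_add[symmetric])
    then show "real_of_int (coeff Q m) * e ^ (k - m) = e ^ k * (real_of_int (coeff Q m) * (1 / e) ^ m)"
      using e0 by (simp add: power_divide field_simps)
  qed
  also have "\<dots> = e ^ k * ipoly Q (1 / e)" by (simp add: ipoly_altdef[OF dQ])
  finally show ?thesis by (simp add: e_def)
qed

lemma Tb_inj:
  assumes "degree Q1 \<le> k" "degree Q2 \<le> k" "M \<noteq> 0" "Tb k r M Q1 = Tb k r M Q2"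
  shows "Q1 = Q2"
proof -
  have "poly (rp Q1 - rp Q2) y = 0" if y: "y \<noteq> 0" for y
  proof -
    define x where "x = real_of_int r + 1 / (real_of_int M * y)"
    have xr: "x \<noteq> real_of_int r" using y assms(3) by (simp add: x_def)
    have e: "1 / (real_of_int M * (x - real_of_int r)) = y" using y assms(3) by (simp add: x_def)
    have e0: "real_of_int M * (x - real_of_int r) \<noteq> 0" using xr assms(3) by simp
    have "ipoly Q1 y = ipoly Q2 y"
      using Tb_eval[OF assms(1,3) xr] Tb_eval[OF assms(2,3) xr] assms(4) e e0 by simp
    then show ?thesis by (simp add: ipoly_def)
  qed
  then have sub: "- {0} \<subseteq> {y. poly (rp Q1 - rp Q2) y = 0}" by auto
  have "rp Q1 - rp Q2 = 0"
  proof (rule ccontr)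
    assume "rp Q1 - rp Q2 \<noteq> 0"
    then have "finite {y. poly (rp Q1 - rp Q2) y = 0}" by (rule poly_roots_finite)
    then have "finite (- {0::real})" using sub finite_subset by blast
    moreover have "infinite (- {0::real})" by (simp add: Compl_eq_Diff_UNIV infinite_UNIV_char_0)
    ultimately show False by simp
  qed
  then show ?thesis by (intro rp_inj) simp
qed

lemma Tb_zero: "Tb k r M 0 = 0" by (simp add: Tb_def)




lemma sup_dense:
  fixes A B :: "real set"
  assumes h1: "\<And>w w'. w \<in> A \<Longrightarrow> w' < w \<Longrightarrow> Q w \<Longrightarrow> w' \<in> B"
    and h2: "\<And>w. w \<in> A \<Longrightarrow> \<not> Q w \<Longrightarrow> ereal w \<le> Sup (ereal ` B)"
  shows "Sup (ereal ` A) \<le> Sup (ereal ` B)"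
proof (rule Sup_least)
  fix x assume "x \<in> ereal ` A"
  then obtain w where w: "w \<in> A" and x: "x = ereal w" by blast
  show "x \<le> Sup (ereal ` B)"
  proof (cases "Q w")
    case False then show ?thesis using h2 w x by simp
  next
    case True
    show ?thesis unfolding x
    proof (rule dense_le)
      fix y assume y: "y < ereal w"
      show "y \<le> Sup (ereal ` B)"
      proof (cases y)
        case (real y')
        then have "y' \<in> B" using h1[OF w _ True] y by simp
        then show ?thesis using real by (auto intro: Sup_upper)
      next
        case PInf then show ?thesis using y by simp
      next
        case MInf then show ?thesis by simp
      qed
    qed
  qed
qed

lemma ipoly_lin: "ipoly [:a, b:] x = real_of_int a + real_of_int b * x"
  by (simp add: ipoly_def rp_pCons)

lemma zero_in:
  assumes "1 \<le> n"
  shows "infinite {P :: int poly. P \<noteq> 0 \<and> degree P \<le> n \<and>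
      \<bar>ipoly P \<xi>\<bar> \<le> (real_of_int (hgt P)) powr (- 0)}"
proof -
  define g where "g q = [:- round (real q * \<xi>), int q:]" for q :: nat
  have inj: "inj_on g {1..}"
  proof (rule inj_onI)
    fix p q assume "g p = g q"
    then have "coeff (g p) 1 = coeff (g q) 1" by simp
    then show "p = q" by (simp add: g_def)
  qed
  have "g ` {1..} \<subseteq> {P :: int poly. P \<noteq> 0 \<and> degree P \<le> n \<and>
      \<bar>ipoly P \<xi>\<bar> \<le> (real_of_int (hgt P)) powr (- 0)}"
  proof
    fix P assume "P \<in> g ` {1..}"
    then obtain q where q: "q \<in> {1..}" and P: "P = g q" by blast
    have h: "hgt (g q) \<ge> 1" by (rule hgt_pos) (use q in \<open>simp add: g_def\<close>)
    have "\<bar>ipoly (g q) \<xi>\<bar> = \<bar>of_int (round (real q * \<xi>)) - real q * \<xi>\<bar>"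
      by (simp add: g_def ipoly_lin)
    also have "\<dots> \<le> 1 / 2" by (rule of_int_round_abs_le)
    also have "\<dots> \<le> real_of_int (hgt (g q)) powr (- 0)" using h by simp
    finally have "\<bar>ipoly (g q) \<xi>\<bar> \<le> real_of_int (hgt (g q)) powr (- 0)" .
    moreover have "g q \<noteq> 0" using q by (simp add: g_def)
    moreover have "degree (g q) \<le> n" using assms by (simp add: g_def)
    ultimately show "P \<in> {P :: int poly. P \<noteq> 0 \<and> degree P \<le> n \<and>
      \<bar>ipoly P \<xi>\<bar> \<le> (real_of_int (hgt P)) powr (- 0)}" using P by simp
  qed
  moreover have "infinite (g ` {1..})"
    using inj finite_imageD infinite_Ici by blast
  ultimately show ?thesis using infinite_super by blast
qed




lemma coeff_from_values:
  fixes T :: "real set"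
  assumes "finite T" "card T = Suc k"
  shows "\<exists>C>0. \<forall>A::int poly. degree A \<le> k \<longrightarrow> (\<forall>j. \<bar>real_of_int (coeff A j)\<bar> \<le> C * (\<Sum>t\<in>T. \<bar>ipoly A t\<bar>))"
proof -
  obtain C where C: "C > 0" "\<forall>p. degree p \<le> k \<longrightarrow> (\<forall>j. \<bar>coeff p j\<bar> \<le> C * (\<Sum>t\<in>T. \<bar>poly p t\<bar>))"
    using lagrange_bound[OF assms] by blast
  show ?thesis
  proof (intro exI[of _ C] conjI allI impI C(1))
    fix A :: "int poly" and j assume "degree A \<le> k"
    then show "\<bar>real_of_int (coeff A j)\<bar> \<le> C * (\<Sum>t\<in>T. \<bar>ipoly A t\<bar>)"
      using C(2)[rule_format, of "rp A" j] by (simp add: ipoly_def coeff_map_poly)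
  qed
qed

lemma nodes0: "finite (real ` {0..k})" "card (real ` {0..k}) = Suc k"
  by (simp_all add: card_image inj_on_def)

lemma index_bound:
  assumes inj: "inj_on r {0..k}"
  shows "\<exists>c>0. \<forall>P. P \<noteq> 0 \<and> degree P \<le> k \<longrightarrow> (\<exists>i\<in>{0..k}. c * real_of_int (hgt P) \<le> \<bar>ipoly P (real_of_int (r i))\<bar>)"
proof -
  have inj': "inj_on (\<lambda>i. real_of_int (r i)) {0..k}" using inj by (auto simp: inj_on_def)
  have "finite ((\<lambda>i. real_of_int (r i)) ` {0..k})" "card ((\<lambda>i. real_of_int (r i)) ` {0..k}) = Suc k"
    using inj' by (simp_all add: card_image)
  from coeff_from_values[OF this] obtain C where C: "C > 0"
    "\<forall>A::int poly. degree A \<le> k \<longrightarrow> (\<forall>j. \<bar>real_of_int (coeff A j)\<bar> \<le> C * (\<Sum>t\<in>(\<lambda>i. real_of_int (r i)) ` {0..k}. \<bar>ipoly A t\<bar>))"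
    by blast
  define c where "c = 1 / (C * Suc k)"
  have c0: "c > 0" using C by (simp add: c_def)
  show ?thesis
  proof (intro exI[of _ c] conjI allI impI c0)
    fix P :: "int poly" assume P: "P \<noteq> 0 \<and> degree P \<le> k"
    show "\<exists>i\<in>{0..k}. c * hgt P \<le> \<bar>ipoly P (real_of_int (r i))\<bar>"
    proof (rule ccontr)
      assume "\<not> ?thesis"
      then have lt: "\<And>i. i \<in> {0..k} \<Longrightarrow> \<bar>ipoly P (real_of_int (r i))\<bar> < c * hgt P" using not_le by blast
      obtain j where j: "hgt P = \<bar>coeff P j\<bar>" using hgt_attained by blast
      have "real_of_int (hgt P) = \<bar>real_of_int (coeff P j)\<bar>" using j by simp
      also have "\<dots> \<le> C * (\<Sum>t\<in>(\<lambda>i. real_of_int (r i)) ` {0..k}. \<bar>ipoly P t\<bar>)" using C(2) P by blast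
      also have "(\<Sum>t\<in>(\<lambda>i. real_of_int (r i)) ` {0..k}. \<bar>ipoly P t\<bar>) = (\<Sum>i\<in>{0..k}. \<bar>ipoly P (real_of_int (r i))\<bar>)"
        using inj' by (simp add: sum.reindex)
      also have "\<dots> < (\<Sum>i\<in>{0..k}. c * hgt P)"
        by (rule sum_strict_mono) (use lt in auto)
      also have "\<dots> = Suc k * c * hgt P" by simp
      finally have "real_of_int (hgt P) < C * (Suc k * c * hgt P)" using C(1) by simp
      also have "\<dots> = hgt P" using C(1) by (simp add: c_def)
      finally show False by simp
    qed
  qed
qed

lemma taylor_bound:
  "\<exists>D>0. \<forall>i\<in>{0..k}. \<forall>P. degree P \<le> k \<longrightarrow>
     (\<forall>j. \<bar>real_of_int (coeff (pcompose P [:r i,1:]) j)\<bar> \<le> D * real_of_int (hgt P))"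
proof -
  from coeff_from_values[OF nodes0] obtain C where C: "C > 0"
    "\<forall>A::int poly. degree A \<le> k \<longrightarrow> (\<forall>j. \<bar>real_of_int (coeff A j)\<bar> \<le> C * (\<Sum>t\<in>real ` {0..k}. \<bar>ipoly A t\<bar>))"
    by blast
  define E where "E i = (\<Sum>t\<in>real ` {0..k}. Suc k * max 1 \<bar>t + real_of_int (r i)\<bar> ^ k)" for i
  define D where "D = 1 + C * (\<Sum>i\<in>{0..k}. E i)"
  have E0: "E i \<ge> 0" for i unfolding E_def by (intro sum_nonneg) auto
  have D0: "D > 0" unfolding D_def using C(1) E0 by (smt (verit) sum_nonneg mult_nonneg_nonneg)
  show ?thesis
  proof (intro exI[of _ D] conjI ballI allI impI D0)
    fix i and P :: "int poly" and j assume i: "i \<in> {0..k}" and P: "degree P \<le> k"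
    have dA: "degree (pcompose P [:r i,1:]) \<le> k" using P by (simp add: degree_shift)
    have h0: "real_of_int (hgt P) \<ge> 0" using hgt_coeff[of P 0] by simp
    have "\<bar>real_of_int (coeff (pcompose P [:r i,1:]) j)\<bar> \<le> C * (\<Sum>t\<in>real ` {0..k}. \<bar>ipoly (pcompose P [:r i,1:]) t\<bar>)"
      using C(2) dA by blast
    also have "(\<Sum>t\<in>real ` {0..k}. \<bar>ipoly (pcompose P [:r i,1:]) t\<bar>) \<le> (\<Sum>t\<in>real ` {0..k}. Suc k * hgt P * max 1 \<bar>t + real_of_int (r i)\<bar> ^ k)"
      by (intro sum_mono) (simp only: ipoly_pcompose_shift ipoly_bound[OF P])
    also have "\<dots> = hgt P * E i" unfolding E_def by (simp add: sum_distrib_left mult_ac)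
    finally have "\<bar>real_of_int (coeff (pcompose P [:r i,1:]) j)\<bar> \<le> C * (hgt P * E i)" using C(1) by simp
    also have "\<dots> \<le> hgt P * (C * (\<Sum>i\<in>{0..k}. E i))"
    proof -
      have "E i \<le> (\<Sum>i\<in>{0..k}. E i)" by (rule member_le_sum) (use i E0 in auto)
      then have "hgt P * E i \<le> hgt P * (\<Sum>i\<in>{0..k}. E i)" using h0 by (rule mult_left_mono)
      then show ?thesis using C(1) by (simp add: mult_ac)
    qed
    also have "\<dots> \<le> D * hgt P" using h0 unfolding D_def by (simp add: algebra_simps)
    finally show "\<bar>real_of_int (coeff (pcompose P [:r i,1:]) j)\<bar> \<le> D * hgt P" .
  qed
qed

lemma tb_height:
  "\<exists>b>0. \<forall>Q. degree Q \<le> k \<longrightarrow> real_of_int (hgt (Tb k r M Q)) \<le> b * real_of_int (hgt Q)"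
proof -
  from coeff_from_values[OF nodes0] obtain C where C: "C > 0"
    "\<forall>A::int poly. degree A \<le> k \<longrightarrow> (\<forall>j. \<bar>real_of_int (coeff A j)\<bar> \<le> C * (\<Sum>t\<in>real ` {0..k}. \<bar>ipoly A t\<bar>))"
    by blast
  define E where "E = (\<Sum>t\<in>real ` {0..k}. \<Sum>m\<le>k. \<bar>real_of_int M * (t - real_of_int r)\<bar> ^ (k-m))"
  have E0: "E \<ge> 0" unfolding E_def by (intro sum_nonneg) auto
  define b where "b = 1 + C * E"
  have b0: "b > 0" unfolding b_def using C(1) E0 by (smt (verit) mult_nonneg_nonneg)
  show ?thesis
  proof (intro exI[of _ b] conjI allI impI b0)
    fix Q :: "int poly" assume Q: "degree Q \<le> k"
    have h0: "real_of_int (hgt Q) \<ge> 0" using hgt_coeff[of Q 0] by simp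
    have vb: "\<bar>ipoly (Tb k r M Q) t\<bar> \<le> hgt Q * (\<Sum>m\<le>k. \<bar>real_of_int M * (t - real_of_int r)\<bar> ^ (k-m))" for t
    proof -
      have "\<bar>ipoly (Tb k r M Q) t\<bar> \<le> (\<Sum>m\<le>k. \<bar>real_of_int (coeff Q m) * (real_of_int M * (t - real_of_int r)) ^ (k-m)\<bar>)"
        unfolding Tb_eval0 by (rule sum_abs)
      also have "\<dots> \<le> (\<Sum>m\<le>k. hgt Q * \<bar>real_of_int M * (t - real_of_int r)\<bar> ^ (k-m))"
      proof (intro sum_mono)
        fix m
        have "\<bar>real_of_int (coeff Q m)\<bar> \<le> hgt Q" using hgt_coeff[of Q m] by linarith
        then show "\<bar>real_of_int (coeff Q m) * (real_of_int M * (t - real_of_int r)) ^ (k-m)\<bar> \<le> hgt Q * \<bar>real_of_int M * (t - real_of_int r)\<bar> ^ (k-m)"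
          by (simp add: abs_mult power_abs mult_right_mono)
      qed
      also have "\<dots> = hgt Q * (\<Sum>m\<le>k. \<bar>real_of_int M * (t - real_of_int r)\<bar> ^ (k-m))"
        by (simp add: sum_distrib_left)
      finally show ?thesis .
    qed
    have "\<bar>real_of_int (coeff (Tb k r M Q) j)\<bar> \<le> b * hgt Q" for j
    proof -
      have "\<bar>real_of_int (coeff (Tb k r M Q) j)\<bar> \<le> C * (\<Sum>t\<in>real ` {0..k}. \<bar>ipoly (Tb k r M Q) t\<bar>)"
        using C(2) Tb_degree by blast
      also have "\<dots> \<le> C * (\<Sum>t\<in>real ` {0..k}. hgt Q * (\<Sum>m\<le>k. \<bar>real_of_int M * (t - real_of_int r)\<bar> ^ (k-m)))"
        using C(1) by (intro mult_left_mono sum_mono vb) auto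
      also have "\<dots> = hgt Q * (C * E)" unfolding E_def by (simp add: sum_distrib_left mult_ac)
      also have "\<dots> \<le> b * hgt Q" using h0 unfolding b_def by (simp add: algebra_simps)
      finally show ?thesis .
    qed
    then show "real_of_int (hgt (Tb k r M Q)) \<le> b * hgt Q"
      using hgt_attained[of "Tb k r M Q"] by (metis of_int_abs)
  qed
qed




lemma finY_lemma: "finite {Q :: int poly. Q \<in> Y \<and> real_of_int (hgt Q) \<le> B}"
  if "\<And>Q. Q \<in> Y \<Longrightarrow> degree Q \<le> k" for Y k B
proof -
  have "{Q. Q \<in> Y \<and> real_of_int (hgt Q) \<le> B} \<subseteq> {P :: int poly. degree P \<le> k \<and> hgt P \<le> \<lfloor>B\<rfloor>}"
    using that by (auto simp: le_floor_iff)
  then show ?thesis using finite_hgt finite_subset by blast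
qed

lemma forward:
  fixes \<xi> :: real and r0 M :: int and c D :: real
  assumes c0: "c > 0"
    and Db: "\<forall>P. degree P \<le> k \<longrightarrow> (\<forall>j. \<bar>real_of_int (coeff (pcompose P [:r0,1:]) j)\<bar> \<le> D * real_of_int (hgt P))"
    and M1: "M \<ge> 1" and cM: "D \<le> c * M"
    and xr: "\<xi> \<noteq> real_of_int r0"
    and inf: "infinite {P. P \<noteq> 0 \<and> degree P \<le> k \<and> c * real_of_int (hgt P) \<le> \<bar>ipoly P (real_of_int r0)\<bar> \<and>
                 \<bar>ipoly P \<xi>\<bar> \<le> (real_of_int (hgt P)) powr (- w)}"
    and ww: "w' < w"
  shows "infinite {Q. Q \<noteq> 0 \<and> degree Q \<le> k \<and> \<bar>coeff Q k\<bar> = hgt Q \<and>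
      \<bar>ipoly Q (1 / (real_of_int M * (\<xi> - real_of_int r0)))\<bar> \<le> (real_of_int (hgt Q)) powr (- w')}"
proof -
  define X where "X = {P. P \<noteq> 0 \<and> degree P \<le> k \<and> c * real_of_int (hgt P) \<le> \<bar>ipoly P (real_of_int r0)\<bar>}"
  define Y where "Y = {Q :: int poly. Q \<noteq> 0 \<and> degree Q \<le> k \<and> \<bar>coeff Q k\<bar> = hgt Q}"
  define \<xi>i where "\<xi>i = 1 / (real_of_int M * (\<xi> - real_of_int r0))"
  define f where "f = Tf k r0 M"
  have M0: "M \<noteq> 0" using M1 by simp
  have Mr: "real_of_int M \<ge> 1" using M1 by simp
  have lead: "real_of_int (coeff (f P) k) = ipoly P (real_of_int r0) * real_of_int M ^ k" for P
  proof -
    have "real_of_int (coeff (pcompose P [:r0,1:]) 0) = ipoly (pcompose P [:r0,1:]) 0"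
      by (simp add: ipoly_def poly_0_coeff_0 coeff_map_poly)
    also have "\<dots> = ipoly P (real_of_int r0)" by (simp add: ipoly_pcompose_shift)
    finally show ?thesis by (simp add: f_def Tf_coeff)
  qed
  have keyX: "\<bar>coeff (f P) k\<bar> = hgt (f P) \<and> f P \<in> Y" if P: "P \<in> X" for P
  proof -
    have dP: "degree P \<le> k" and cP: "c * real_of_int (hgt P) \<le> \<bar>ipoly P (real_of_int r0)\<bar>" and P0: "P \<noteq> 0"
      using P by (auto simp: X_def)
    have hP: "real_of_int (hgt P) \<ge> 1" using hgt_pos[OF P0] by simp
    have bnd: "\<bar>coeff (f P) m\<bar> \<le> \<bar>coeff (f P) k\<bar>" for m
    proof (cases "m < k")
      case True
      have "\<bar>real_of_int (coeff (f P) m)\<bar> = \<bar>real_of_int (coeff (pcompose P [:r0,1:]) (k-m))\<bar> * real_of_int M ^ m"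
        using True M1 by (simp add: f_def Tf_coeff abs_mult)
      also have "\<dots> \<le> (D * real_of_int (hgt P)) * real_of_int M ^ m"
        using Db dP Mr by (intro mult_right_mono) auto
      also have "\<dots> \<le> (c * real_of_int M * real_of_int (hgt P)) * real_of_int M ^ m"
        using cM hP Mr by (intro mult_right_mono) auto
      also have "\<dots> = c * real_of_int (hgt P) * real_of_int M ^ Suc m" by (simp add: mult_ac)
      also have "\<dots> \<le> c * real_of_int (hgt P) * real_of_int M ^ k"
        using True Mr c0 hP by (intro mult_left_mono power_increasing) auto
      also have "\<dots> \<le> \<bar>ipoly P (real_of_int r0)\<bar> * real_of_int M ^ k"
        using cP Mr by (intro mult_right_mono) auto
      also have "\<dots> = \<bar>real_of_int (coeff (f P) k)\<bar>" using Mr by (simp add: lead abs_mult)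
      finally show ?thesis by linarith
    next
      case False
      then show ?thesis by (cases "m = k") (auto simp: f_def Tf_coeff)
    qed
    have nz: "coeff (f P) k \<noteq> 0"
    proof -
      have "\<bar>ipoly P (real_of_int r0)\<bar> > 0" using cP c0 hP
        by (smt (verit) mult_pos_pos)
      then show ?thesis using lead[of P] Mr by auto
    qed
    have h: "\<bar>coeff (f P) k\<bar> = hgt (f P)"
      using hgt_le[of "f P", OF bnd] hgt_coeff[of "f P" k] by simp
    moreover have "f P \<noteq> 0" using nz by auto
    ultimately show ?thesis by (simp add: Y_def f_def Tf_degree)
  qed
  have hgtf: "real_of_int (hgt (f P)) = \<bar>ipoly P (real_of_int r0)\<bar> * real_of_int M ^ k" if P: "P \<in> X" for P
  proof -
    have "real_of_int (hgt (f P)) = \<bar>real_of_int (coeff (f P) k)\<bar>"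
      using keyX[OF P] by (metis of_int_abs)
    also have "\<dots> = \<bar>ipoly P (real_of_int r0) * real_of_int M ^ k\<bar>" by (simp only: lead)
    also have "\<dots> = \<bar>ipoly P (real_of_int r0)\<bar> * real_of_int M ^ k" using Mr by (simp add: abs_mult)
    finally show ?thesis .
  qed
  have "infinite {y\<in>Y. \<bar>ipoly y \<xi>i\<bar> \<le> real_of_int (hgt y) powr (-w')}"
  proof (rule xfer_lemma[where X = X and f = f and hX = "\<lambda>P. real_of_int (hgt P)" and vX = "\<lambda>P. \<bar>ipoly P \<xi>\<bar>"
        and b = "Suc k * max 1 \<bar>real_of_int r0\<bar> ^ k * real_of_int M ^ k" and a = "c * real_of_int M ^ k"
        and K = "1 / \<bar>\<xi> - real_of_int r0\<bar> ^ k" and w = w])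
    show "infinite {x \<in> X. \<bar>ipoly x \<xi>\<bar> \<le> real_of_int (hgt x) powr - w}"
      using inf by (simp add: X_def conj_assoc)
    show "w' < w" by (rule ww)
    show "inj_on f X"
      by (rule inj_onI) (use M0 in \<open>auto simp: X_def f_def intro: Tf_inj\<close>)
    show "f ` X \<subseteq> Y" using keyX by auto
    show "\<forall>x\<in>X. 1 \<le> real_of_int (hgt x)" using hgt_pos by (auto simp: X_def)
    show "\<forall>y\<in>Y. 1 \<le> real_of_int (hgt y)" using hgt_pos by (auto simp: Y_def)
    show "\<forall>x\<in>X. real_of_int (hgt (f x)) \<le> Suc k * max 1 \<bar>real_of_int r0\<bar> ^ k * real_of_int M ^ k * real_of_int (hgt x)"
    proof
      fix P assume P: "P \<in> X"
      have "real_of_int (hgt (f P)) = \<bar>ipoly P (real_of_int r0)\<bar> * real_of_int M ^ k"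
        by (rule hgtf[OF P])
      also have "\<dots> \<le> (Suc k * real_of_int (hgt P) * max 1 \<bar>real_of_int r0\<bar> ^ k) * real_of_int M ^ k"
        using P Mr ipoly_bound[of P k "real_of_int r0"] by (intro mult_right_mono) (auto simp: X_def)
      finally show "real_of_int (hgt (f P)) \<le> Suc k * max 1 \<bar>real_of_int r0\<bar> ^ k * real_of_int M ^ k * real_of_int (hgt P)"
        by (simp add: mult_ac)
    qed
    show "0 < Suc k * max 1 \<bar>real_of_int r0\<bar> ^ k * real_of_int M ^ k" using Mr by simp
    show "0 \<le> w \<or> 0 < c * real_of_int M ^ k \<and> (\<forall>x\<in>X. c * real_of_int M ^ k * real_of_int (hgt x) \<le> real_of_int (hgt (f x)))"
    proof (rule disjI2, intro conjI ballI)
      show "0 < c * real_of_int M ^ k" using c0 Mr by simp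
      fix P assume P: "P \<in> X"
      have "real_of_int (hgt (f P)) = \<bar>ipoly P (real_of_int r0)\<bar> * real_of_int M ^ k"
        by (rule hgtf[OF P])
      moreover have "c * real_of_int (hgt P) * real_of_int M ^ k \<le> \<bar>ipoly P (real_of_int r0)\<bar> * real_of_int M ^ k"
        using P Mr by (intro mult_right_mono) (auto simp: X_def)
      ultimately show "c * real_of_int M ^ k * real_of_int (hgt P) \<le> real_of_int (hgt (f P))"
        by (simp add: mult_ac)
    qed
    show "\<forall>x\<in>X. \<bar>ipoly (f x) \<xi>i\<bar> \<le> 1 / \<bar>\<xi> - real_of_int r0\<bar> ^ k * \<bar>ipoly x \<xi>\<bar>"
    proof
      fix P assume P: "P \<in> X"
      have "ipoly (f P) \<xi>i = ipoly P \<xi> / (\<xi> - real_of_int r0) ^ k"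
        unfolding f_def \<xi>i_def by (rule Tf_eval) (use P M0 xr in \<open>auto simp: X_def\<close>)
      then show "\<bar>ipoly (f P) \<xi>i\<bar> \<le> 1 / \<bar>\<xi> - real_of_int r0\<bar> ^ k * \<bar>ipoly P \<xi>\<bar>"
        by (simp add: abs_divide power_abs)
    qed
    show "0 \<le> 1 / \<bar>\<xi> - real_of_int r0\<bar> ^ k" by simp
    show "finite {y \<in> Y. real_of_int (hgt y) \<le> B}" for B
      using finY_lemma[of Y k B] by (simp add: Y_def)
  qed
  then show ?thesis by (simp add: Y_def \<xi>i_def conj_assoc)
qed




lemma backward:
  fixes \<xi> :: real and rr M :: int
  assumes M1: "M \<ge> 1" and xr: "\<xi> \<noteq> real_of_int rr"
    and inf: "infinite {Q. Q \<noteq> 0 \<and> degree Q \<le> k \<and>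
      \<bar>ipoly Q (1 / (real_of_int M * (\<xi> - real_of_int rr)))\<bar> \<le> (real_of_int (hgt Q)) powr (- w)}"
    and w0: "0 \<le> w" and ww: "w' < w"
  shows "infinite {P. P \<noteq> 0 \<and> degree P \<le> k \<and> \<bar>ipoly P \<xi>\<bar> \<le> (real_of_int (hgt P)) powr (- w')}"
proof -
  define X where "X = {Q :: int poly. Q \<noteq> 0 \<and> degree Q \<le> k}"
  define \<xi>i where "\<xi>i = 1 / (real_of_int M * (\<xi> - real_of_int rr))"
  define f where "f = Tb k rr M"
  have M0: "M \<noteq> 0" using M1 by simp
  obtain b where b: "b > 0" "\<forall>Q. degree Q \<le> k \<longrightarrow> real_of_int (hgt (Tb k rr M Q)) \<le> b * real_of_int (hgt Q)"
    using tb_height by blast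
  have "infinite {y\<in>X. \<bar>ipoly y \<xi>\<bar> \<le> real_of_int (hgt y) powr (-w')}"
  proof (rule xfer_lemma[where X = X and f = f and hX = "\<lambda>P. real_of_int (hgt P)" and vX = "\<lambda>P. \<bar>ipoly P \<xi>i\<bar>"
        and b = b and a = 1 and K = "\<bar>real_of_int M * (\<xi> - real_of_int rr)\<bar> ^ k" and w = w])
    show "infinite {x \<in> X. \<bar>ipoly x \<xi>i\<bar> \<le> real_of_int (hgt x) powr - w}"
      using inf by (simp add: X_def \<xi>i_def conj_assoc)
    show "w' < w" by (rule ww)
    show "inj_on f X"
      by (rule inj_onI) (use M0 in \<open>auto simp: X_def f_def intro: Tb_inj\<close>)
    show "f ` X \<subseteq> X"
    proof
      fix P assume "P \<in> f ` X"
      then obtain Q where Q: "Q \<in> X" "P = f Q" by blast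
      have "f Q \<noteq> 0"
      proof
        assume "f Q = 0"
        then have "Tb k rr M Q = Tb k rr M 0" by (simp add: f_def Tb_zero)
        then have "Q = 0" using Q M0 by (intro Tb_inj[of Q k 0 M rr]) (auto simp: X_def)
        then show False using Q by (simp add: X_def)
      qed
      then show "P \<in> X" using Q by (simp add: X_def f_def Tb_degree)
    qed
    show "\<forall>x\<in>X. 1 \<le> real_of_int (hgt x)" using hgt_pos by (auto simp: X_def)
    show "\<forall>y\<in>X. 1 \<le> real_of_int (hgt y)" using hgt_pos by (auto simp: X_def)
    show "\<forall>x\<in>X. real_of_int (hgt (f x)) \<le> b * real_of_int (hgt x)"
      using b(2) by (auto simp: X_def f_def)
    show "0 < b" by (rule b(1))
    show "0 \<le> w \<or> 0 < (1::real) \<and> (\<forall>x\<in>X. 1 * real_of_int (hgt x) \<le> real_of_int (hgt (f x)))"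
      using w0 by simp
    show "\<forall>x\<in>X. \<bar>ipoly (f x) \<xi>\<bar> \<le> \<bar>real_of_int M * (\<xi> - real_of_int rr)\<bar> ^ k * \<bar>ipoly x \<xi>i\<bar>"
    proof
      fix Q assume Q: "Q \<in> X"
      have "ipoly (f Q) \<xi> = (real_of_int M * (\<xi> - real_of_int rr)) ^ k * ipoly Q \<xi>i"
        unfolding f_def \<xi>i_def by (rule Tb_eval) (use Q M0 xr in \<open>auto simp: X_def\<close>)
      then show "\<bar>ipoly (f Q) \<xi>\<bar> \<le> \<bar>real_of_int M * (\<xi> - real_of_int rr)\<bar> ^ k * \<bar>ipoly Q \<xi>i\<bar>"
        by (simp add: abs_mult power_abs)
    qed
    show "0 \<le> \<bar>real_of_int M * (\<xi> - real_of_int rr)\<bar> ^ k" by simp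
    show "finite {y \<in> X. real_of_int (hgt y) \<le> B}" for B
      using finY_lemma[of X k B] by (simp add: X_def)
  qed
  then show ?thesis by (simp add: X_def conj_assoc)
qed

lemma finite_bad:
  fixes \<xi> :: real and c :: real
  assumes c0: "c > 0" and w0: "0 \<le> w" and e: "real_of_int r0 = \<xi>"
  shows "finite {P. P \<noteq> 0 \<and> degree P \<le> k \<and> c * real_of_int (hgt P) \<le> \<bar>ipoly P (real_of_int r0)\<bar> \<and>
                 \<bar>ipoly P \<xi>\<bar> \<le> (real_of_int (hgt P)) powr (- w)}"
proof -
  have "{P. P \<noteq> 0 \<and> degree P \<le> k \<and> c * real_of_int (hgt P) \<le> \<bar>ipoly P (real_of_int r0)\<bar> \<and>
                 \<bar>ipoly P \<xi>\<bar> \<le> (real_of_int (hgt P)) powr (- w)} \<subseteq> {P. degree P \<le> k \<and> hgt P \<le> \<lceil>1 / c\<rceil>}"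
  proof safe
    fix P :: "int poly" assume P0: "P \<noteq> 0" and a: "c * real_of_int (hgt P) \<le> \<bar>ipoly P (real_of_int r0)\<bar>"
      and b: "\<bar>ipoly P \<xi>\<bar> \<le> (real_of_int (hgt P)) powr (- w)"
    have h: "real_of_int (hgt P) \<ge> 1" using hgt_pos[OF P0] by simp
    have "(real_of_int (hgt P)) powr (- w) \<le> 1"
      using h w0 by (simp add: powr_minus ge_one_powr_ge_zero inverse_le_1_iff)
    then have "c * real_of_int (hgt P) \<le> 1" using a b e by simp
    then have "real_of_int (hgt P) \<le> 1 / c" using c0 by (simp add: field_simps)
    then show "hgt P \<le> \<lceil>1 / c\<rceil>" by linarith
  qed
  moreover have "finite {P :: int poly. degree P \<le> k \<and> hgt P \<le> \<lceil>1 / c\<rceil>}" by (rule finite_hgt)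
  ultimately show ?thesis using finite_subset by blast
qed




theorem mainTheorem1:
  fixes k :: nat and r :: "nat \<Rightarrow> int"
  assumes "k \<ge> 1"
    and "inj_on r {0..k}"
  shows "\<exists>M :: int. M \<ge> 1 \<and> (\<forall>\<xi> :: real. \<exists>i \<in> {0..k}. real_of_int (r i) \<noteq> \<xi> \<and>
           omega_lead k (1 / (real_of_int M * (\<xi> - real_of_int (r i)))) =
             omega k (1 / (real_of_int M * (\<xi> - real_of_int (r i)))) \<and>
           omega k (1 / (real_of_int M * (\<xi> - real_of_int (r i)))) = omega k \<xi>)"
proof -
  obtain c where c0: "c > 0" and cidx: "\<And>P. P \<noteq> 0 \<Longrightarrow> degree P \<le> k \<Longrightarrow>
      \<exists>i\<in>{0..k}. c * real_of_int (hgt P) \<le> \<bar>ipoly P (real_of_int (r i))\<bar>"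
    using index_bound[OF assms(2)] by blast
  obtain D where D0: "D > 0" and Db: "\<forall>i\<in>{0..k}. \<forall>P. degree P \<le> k \<longrightarrow>
     (\<forall>j. \<bar>real_of_int (coeff (pcompose P [:r i,1:]) j)\<bar> \<le> D * real_of_int (hgt P))"
    using taylor_bound by blast
  define M :: int where "M = \<lceil>D / c\<rceil> + 1"
  have M1: "M \<ge> 1" using D0 c0 by (simp add: M_def) (smt (verit) divide_pos_pos of_int_ceiling_le_add_one zero_less_ceiling)
  have cM: "D \<le> c * real_of_int M"
  proof -
    have "D / c \<le> real_of_int M" unfolding M_def by linarith
    then show ?thesis using c0 by (simp add: field_simps)
  qed
  show ?thesis
  proof (intro exI[of _ M] conjI allI M1)
    fix \<xi> :: real
    define W where "W x = {w. infinite {P :: int poly. P \<noteq> 0 \<and> degree P \<le> k \<and>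
      \<bar>ipoly P x\<bar> \<le> (real_of_int (hgt P)) powr (- w)}}" for x
    define WL where "WL x = {w. infinite {P :: int poly. P \<noteq> 0 \<and> degree P \<le> k \<and> \<bar>coeff P k\<bar> = hgt P \<and>
      \<bar>ipoly P x\<bar> \<le> (real_of_int (hgt P)) powr (- w)}}" for x
    have om: "omega k x = Sup (ereal ` W x)" for x by (simp add: omega_def W_def)
    have oml: "omega_lead k x = Sup (ereal ` WL x)" for x by (simp add: omega_lead_def WL_def)
    define S where "S i = {w. infinite {P. P \<noteq> 0 \<and> degree P \<le> k \<and> c * real_of_int (hgt P) \<le> \<bar>ipoly P (real_of_int (r i))\<bar> \<and>
                 \<bar>ipoly P \<xi>\<bar> \<le> (real_of_int (hgt P)) powr (- w)}}" for i
    define I where "I = {i\<in>{0..k}. real_of_int (r i) \<noteq> \<xi>}"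
    have zW: "0 \<in> W x" for x using zero_in[OF assms(1)] by (simp add: W_def)
    have claim1: "\<exists>i\<in>I. w \<in> S i" if w: "w \<in> W \<xi>" and w0: "w \<ge> 0" for w
    proof (rule ccontr)
      assume neg: "\<not> (\<exists>i\<in>I. w \<in> S i)"
      have fin: "finite {P. P \<noteq> 0 \<and> degree P \<le> k \<and> c * real_of_int (hgt P) \<le> \<bar>ipoly P (real_of_int (r i))\<bar> \<and>
                 \<bar>ipoly P \<xi>\<bar> \<le> (real_of_int (hgt P)) powr (- w)}" if "i \<in> {0..k}" for i
      proof (cases "real_of_int (r i) = \<xi>")
        case True then show ?thesis by (rule finite_bad[OF c0 w0])
      next
        case False then show ?thesis using that neg by (auto simp: I_def S_def)
      qed
      have "{P :: int poly. P \<noteq> 0 \<and> degree P \<le> k \<and> \<bar>ipoly P \<xi>\<bar> \<le> (real_of_int (hgt P)) powr (- w)} \<subseteq>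
        (\<Union>i\<in>{0..k}. {P. P \<noteq> 0 \<and> degree P \<le> k \<and> c * real_of_int (hgt P) \<le> \<bar>ipoly P (real_of_int (r i))\<bar> \<and>
                 \<bar>ipoly P \<xi>\<bar> \<le> (real_of_int (hgt P)) powr (- w)})"
        using cidx by blast
      moreover have "finite (\<Union>i\<in>{0..k}. {P. P \<noteq> 0 \<and> degree P \<le> k \<and> c * real_of_int (hgt P) \<le> \<bar>ipoly P (real_of_int (r i))\<bar> \<and>
                 \<bar>ipoly P \<xi>\<bar> \<le> (real_of_int (hgt P)) powr (- w)})"
        using fin by blast
      ultimately show False using w finite_subset unfolding W_def by blast
    qed
    obtain i0 where i0: "i0 \<in> I" "0 \<in> S i0" using claim1[OF zW] by auto
    define g where "g i = Sup (ereal ` S i)" for i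
    have finI: "finite I" by (simp add: I_def)
    obtain i where iI: "i \<in> I" and imax: "\<And>j. j \<in> I \<Longrightarrow> g j \<le> g i"
    proof -
      have "Max (g ` I) \<in> g ` I" using finI i0 by (intro Max_in) auto
      then obtain i where "i \<in> I" "g i = Max (g ` I)" by auto
      moreover have "g j \<le> Max (g ` I)" if "j \<in> I" for j using finI that by (intro Max_ge) auto
      ultimately show ?thesis using that by metis
    qed
    have ri: "real_of_int (r i) \<noteq> \<xi>" and i_k: "i \<in> {0..k}" using iI by (auto simp: I_def)
    define \<xi>i where "\<xi>i = 1 / (real_of_int M * (\<xi> - real_of_int (r i)))"
    have step1: "omega k \<xi> \<le> g i"
      unfolding om
    proof (rule Sup_least)
      fix x assume "x \<in> ereal ` W \<xi>"
      then obtain w where w: "w \<in> W \<xi>" and x: "x = ereal w" by blast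
      show "x \<le> g i"
      proof (cases "w \<ge> 0")
        case True
        then obtain j where j: "j \<in> I" "w \<in> S j" using claim1[OF w] by blast
        have "ereal w \<le> g j" unfolding g_def using j by (auto intro: Sup_upper)
        then show ?thesis using imax[OF j(1)] x by simp
      next
        case False
        have "ereal 0 \<le> g i0" unfolding g_def using i0 by (auto intro: Sup_upper)
        moreover have "ereal w \<le> ereal 0" using False by simp
        ultimately show ?thesis using imax[OF i0(1)] x by (meson order.trans)
      qed
    qed
    have step2: "g i \<le> omega_lead k \<xi>i"
      unfolding g_def oml
    proof (rule sup_dense[where Q = "\<lambda>_. True"])
      fix w w' assume w: "w \<in> S i" and ww: "w' < w"
      have "infinite {Q. Q \<noteq> 0 \<and> degree Q \<le> k \<and> \<bar>coeff Q k\<bar> = hgt Q \<and>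
          \<bar>ipoly Q (1 / (real_of_int M * (\<xi> - real_of_int (r i))))\<bar> \<le> (real_of_int (hgt Q)) powr (- w')}"
        by (rule forward[OF c0 _ M1 cM _ _ ww]) (use Db i_k ri w in \<open>auto simp: S_def\<close>)
      then show "w' \<in> WL \<xi>i" by (simp add: WL_def \<xi>i_def)
    qed simp
    have step3: "omega_lead k \<xi>i \<le> omega k \<xi>i"
      unfolding om oml
    proof (intro Sup_subset_mono image_mono subsetI)
      fix w assume "w \<in> WL \<xi>i"
      then show "w \<in> W \<xi>i" unfolding WL_def W_def
        by (auto elim!: infinite_super[rotated])
    qed
    have step4: "omega k \<xi>i \<le> omega k \<xi>"
      unfolding om
    proof (rule sup_dense[where Q = "\<lambda>w. w > 0"])
      fix w w' assume w: "w \<in> W \<xi>i" and ww: "w' < w" and wp: "w > 0"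
      have "infinite {P. P \<noteq> 0 \<and> degree P \<le> k \<and> \<bar>ipoly P \<xi>\<bar> \<le> (real_of_int (hgt P)) powr (- w')}"
        by (rule backward[where rr = "r i" and M = M and w = w]) (use M1 ww ri w wp in \<open>auto simp: W_def \<xi>i_def\<close>)
      then show "w' \<in> W \<xi>" by (simp add: W_def)
    next
      fix w assume "w \<in> W \<xi>i" "\<not> w > 0"
      then have "ereal w \<le> ereal 0" by simp
      also have "ereal 0 \<le> Sup (ereal ` W \<xi>)" using zW by (auto intro: Sup_upper)
      finally show "ereal w \<le> Sup (ereal ` W \<xi>)" .
    qed
    show "\<exists>i \<in> {0..k}. real_of_int (r i) \<noteq> \<xi> \<and>
           omega_lead k (1 / (real_of_int M * (\<xi> - real_of_int (r i)))) =
             omega k (1 / (real_of_int M * (\<xi> - real_of_int (r i)))) \<and>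
           omega k (1 / (real_of_int M * (\<xi> - real_of_int (r i)))) = omega k \<xi>"
    proof (intro bexI[OF _ i_k] conjI ri)
      show "omega_lead k (1 / (real_of_int M * (\<xi> - real_of_int (r i)))) =
             omega k (1 / (real_of_int M * (\<xi> - real_of_int (r i))))"
        using step1 step2 step3 step4 unfolding \<xi>i_def by order
      show "omega k (1 / (real_of_int M * (\<xi> - real_of_int (r i)))) = omega k \<xi>"
        using step1 step2 step3 step4 unfolding \<xi>i_def by order
    qed
  qed
qed


end
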